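(* Let $A\in\mathbb{R}^{n\times n}$ be Hurwitz, $B\in\mathbb{R}^{n\times m}$, $C\in\mathbb{R}^{1\times n}$, and $M\in\mathbb{R}^{n\times n}$ symmetric. Let $W,V\in\mathbb{R}^{n\times r}$ with $W^\top V=I_r$. Define $\hat A=W^\top AV$, $\hat B=W^\top B$, $\hat C=CV$, $\hat M=V^\top MV$, and assume $\hat A$ is Hurwitz. Let $P$, $X$, $\hat P$ be the unique solutions of $$AP+PA^\top+BB^\top=0,\qquad AX+X\hat A^\top+B\hat B^\top=0,\qquad \hat A\hat P+\hat P\hat A^\top+\hat B\hat B^\top=0,$$ and let $K\in\mathbb{R}^{n\times r}$, $L\in\mathbb{R}^{r\times r}$ be the unique solutions of $$A^\top K+K\hat A-C^\top\hat C-2MX\hat M=0,\qquad \hat A^\top L+L\hat A+\hat C^\top\hat C+2\hat M\hat P\hat M=0.$$ Consider the cost function $$J_1(W,V)=\mathrm{tr}\big(CPC^\top-2CX\hat C^\top+\hat C\hat P\hat C^\top\big)+\mathrm{tr}\big(PMPM-2X^\top MX\hat M+\hat P\hat M\hat P\hat M\big),$$ regarded as a function of the two matrix variables $W,V\in\mathbb{R}^{n\times r}$ (through $\hat A,\hat B,\hat C,\hat M$). Then the partial-derivative matrices $J_{1,W}=\nabla_W J_1\in\mathbb{R}^{n\times r}$ and $J_{1,V}=\nabla_V J_1\in\mathbb{R}^{n\times r}$, defined entrywise by $(J_{1,W})_{ij}=\partial J_1/\partial W_{ij}$ and $(J_{1,V})_{ij}=\partial J_1/\partial V_{ij}$, are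 given by $$J_{1,W}=2\Big(AV\big(X^\top K+\hat PL\big)+BB^\top\big(K+WL\big)\Big),$$ $$J_{1,V}=2\Big(A^\top W\big(K^\top X+L\hat P\big)+C^\top C\big(V\hat P-X\big)+2MV\big(\hat P\hat M\hat P-X^\top MX\big)\Big).$$
   Context: This concerns a linear time-invariant system with quadratic output (LQO system) $\dot x=Ax+Bu$, $y=Cx+x^\top Mx$, and a reduced-order model of the same form with matrices $(\hat A,\hat B,\hat C,\hat M)$ obtained by Petrov–Galerkin projection. The function $J_1(W,V)$ equals the squared $H_2$ norm of the error system between the full and reduced LQO systems; equivalently $J_1=\mathrm{tr}(B^\top QB+2B^\top Y\hat B+\hat B^\top\hat Q\hat B)$, where $A^\top Q+QA+C^\top C+MPM=0$, $A^\top Y+Y\hat A-C^\top\hat C-MX\hat M=0$, and $\hat A^\top\hat Q+\hat Q\hat A+\hat C^\top\hat C+\hat M\hat P\hat M=0$. A matrix is Hurwitz if all its eigenvalues have negative real part. *)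

theory Defs
  imports "HOL-Analysis.Analysis"
begin

definition hurwitz :: "real^'n^'n \<Rightarrow> bool" where
  "hurwitz A \<longleftrightarrow>
     (\<forall>(lam::complex) (v::complex^'n). v \<noteq> 0 \<and> map_matrix complex_of_real A *v v = lam *s v
        \<longrightarrow> Re lam < 0)"

definition red_A :: "real^'n^'n \<Rightarrow> real^'r^'n \<Rightarrow> real^'r^'n \<Rightarrow> real^'r^'r" where
  "red_A A W V = transpose W ** A ** V"
definition red_B :: "real^'m^'n \<Rightarrow> real^'r^'n \<Rightarrow> real^'m^'r" where
  "red_B B W = transpose W ** B"
definition red_C :: "real^'n^1 \<Rightarrow> real^'r^'n \<Rightarrow> real^'r^1" where
  "red_C C V = C ** V"
definition red_M :: "real^'n^'n \<Rightarrow> real^'r^'n \<Rightarrow> real^'r^'r" where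
  "red_M M V = transpose V ** M ** V"

definition J1 :: "real^'n^'n \<Rightarrow> real^'m^'n \<Rightarrow> real^'n^1 \<Rightarrow> real^'n^'n
                  \<Rightarrow> real^'r^'n \<Rightarrow> real^'r^'n \<Rightarrow> real" where
  "J1 A B C M W V =
     (let Ah = (red_A A W V :: real^'r^'r); Bh = (red_B B W :: real^'m^'r);
          Ch = (red_C C V :: real^'r^1); Mh = (red_M M V :: real^'r^'r);
          P = (THE P::real^'n^'n. A ** P + P ** transpose A + B ** transpose B = 0);
          X = (THE X::real^'r^'n. A ** X + X ** transpose Ah + B ** transpose Bh = 0);
          Ph = (THE Ph::real^'r^'r. Ah ** Ph + Ph ** transpose Ah + Bh ** transpose Bh = 0)
      in trace (C ** P ** transpose C - 2 *\<^sub>R (C ** X ** transpose Ch) + Ch ** Ph ** transpose Ch)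
       + (trace (P ** M ** P ** M) - 2 * trace (transpose X ** M ** X ** Mh)
          + trace (Ph ** Mh ** Ph ** Mh)))"

definition ematrix :: "'i::finite \<Rightarrow> 'j::finite \<Rightarrow> real^'j^'i" where
  "ematrix i j = (\<chi> a b. if a = i \<and> b = j then 1 else 0)"

end

theory Submission
  imports Defs "HOL-Computational_Algebra.Fundamental_Theorem_Algebra"
begin

lemma mm_add_r: "((A::'a::semiring_1^'n^'m) + B) ** C = A ** C + B ** C"
  by (vector matrix_matrix_mult_def sum.distrib[symmetric] field_simps)
lemma mm_diff_l: "(A::'a::ring_1^'n^'m) ** (B - C) = A ** B - A ** C"
  by (vector matrix_matrix_mult_def sum_subtractf[symmetric] field_simps)
lemma mm_diff_r: "((A::'a::ring_1^'n^'m) - B) ** C = A ** C - B ** C"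
  by (vector matrix_matrix_mult_def sum_subtractf[symmetric] field_simps)
lemma mm_neg_l: "(- (A::'a::ring_1^'n^'m)) ** B = - (A ** B)"
  by (vector matrix_matrix_mult_def sum_negf[symmetric])
lemma mm_neg_r: "(A::'a::ring_1^'n^'m) ** (- B) = - (A ** B)"
  by (vector matrix_matrix_mult_def sum_negf[symmetric])
lemma tr_add: "transpose ((A::'a::semiring_1^'n^'m) + B) = transpose A + transpose B"
  by (vector transpose_def)
lemma tr_diff: "transpose ((A::'a::ring_1^'n^'m) - B) = transpose A - transpose B"
  by (vector transpose_def)
lemma tr_neg: "transpose (- (A::'a::ring_1^'n^'m)) = - transpose A"
  by (vector transpose_def)
lemma tr_zero: "transpose (0::'a::semiring_1^'n^'m) = 0"
  by (vector transpose_def)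
lemma mat_add: "mat (a + b) = (mat a + mat b :: 'a::semiring_1^'n^'n)"
  by (vector mat_def)
lemma mat_neg: "mat (- a) = (- mat a :: 'a::ring_1^'n^'n)"
  by (vector mat_def)
lemma mat_mm_l: "(mat c :: 'a::comm_semiring_1^'m^'m) ** A = (\<chi> i j. c * A $ i $ j)"
  unfolding matrix_matrix_mult_def mat_def
  by (auto simp: vec_eq_iff if_distrib if_distribR sum.delta cong: if_cong)
lemma mat_mm_r: "(A :: 'a::comm_semiring_1^'m^'n) ** mat c = (\<chi> i j. c * A $ i $ j)"
  unfolding matrix_matrix_mult_def mat_def
  by (auto simp: vec_eq_iff if_distrib if_distribR sum.delta' mult.commute cong: if_cong)
lemma mat_comm: "(mat c :: 'a::comm_semiring_1^'m^'m) ** A = A ** mat c"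
  by (simp add: mat_mm_l mat_mm_r)
lemma mat_comm_mid: "(M::'a::comm_semiring_1^'m^'m) ** (mat c ** P) = mat c ** (M ** P)"
  by (metis matrix_mul_assoc mat_comm)
lemma mat_mult: "mat (a * b) = (mat a ** mat b :: 'a::comm_semiring_1^'n^'n)"
  by (simp add: mat_mm_l) (vector mat_def)
lemma mm_sum_l: "finite S \<Longrightarrow> (A::'a::semiring_1^'n^'m) ** (\<Sum>i\<in>S. f i) = (\<Sum>i\<in>S. A ** f i)"
  by (induction S rule: finite_induct) (auto simp: matrix_add_ldistrib)

section \<open>Matrix polynomials\<close>

fun mpow :: "'a::semiring_1^'n^'n \<Rightarrow> nat \<Rightarrow> 'a^'n^'n" where
  "mpow M 0 = mat 1"
| "mpow M (Suc k) = M ** mpow M k"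

fun mprod :: "nat \<Rightarrow> (nat \<Rightarrow> 'a::semiring_1^'n^'n) \<Rightarrow> 'a^'n^'n" where
  "mprod 0 f = mat 1"
| "mprod (Suc d) f = mprod d f ** f d"

definition peval :: "'a::comm_ring_1 poly \<Rightarrow> 'a^'n^'n \<Rightarrow> 'a^'n^'n" where
  "peval p M = (\<Sum>k\<le>degree p. mat (coeff p k) ** mpow M k)"

lemma peval_ext:
  assumes "degree p \<le> N"
  shows "peval p M = (\<Sum>k\<le>N. mat (coeff p k) ** mpow M k)"
  unfolding peval_def
  by (rule sum.mono_neutral_left) (use assms in \<open>auto simp: coeff_eq_0\<close>)

lemma peval_0[simp]: "peval 0 M = 0"
  by (simp add: peval_def)

lemma peval_add: "peval (p + q) M = peval p M + peval q M"
proof -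
  let ?N = "max (degree p) (degree q)"
  have "peval (p + q) M = (\<Sum>k\<le>?N. mat (coeff (p+q) k) ** mpow M k)"
    by (rule peval_ext) (simp add: degree_add_le)
  also have "\<dots> = (\<Sum>k\<le>?N. mat (coeff p k) ** mpow M k) + (\<Sum>k\<le>?N. mat (coeff q k) ** mpow M k)"
    by (simp add: mat_add mm_add_r sum.distrib)
  also have "\<dots> = peval p M + peval q M"
    using peval_ext[of p ?N M] peval_ext[of q ?N M] by simp
  finally show ?thesis .
qed

lemma peval_smult: "peval (smult a p) M = mat a ** peval p M"
proof -
  have "peval (smult a p) M = (\<Sum>k\<le>degree p. mat (coeff (smult a p) k) ** mpow M k)"
    by (rule peval_ext) (simp add: degree_smult_le)
  also have "\<dots> = mat a ** peval p M"
    by (simp add: peval_def mm_sum_l mat_mult matrix_mul_assoc)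
  finally show ?thesis .
qed

lemma mpow_comm: "M ** mpow M k = mpow M k ** M"
  by (induction k) (auto simp: matrix_mul_assoc)

lemma peval_pCons0: "peval (pCons 0 p) M = M ** peval p M"
proof -
  have "peval (pCons 0 p) M = (\<Sum>k\<le>Suc (degree p). mat (coeff (pCons 0 p) k) ** mpow M k)"
    by (rule peval_ext) (simp add: degree_pCons_le)
  also have "\<dots> = (\<Sum>k\<le>degree p. mat (coeff p k) ** (M ** mpow M k))"
    by (subst sum.atMost_Suc_shift) simp
  also have "\<dots> = M ** peval p M"
    unfolding peval_def mm_sum_l[OF finite_atMost]
    by (intro sum.cong refl) (simp add: mat_comm_mid)
  finally show ?thesis .
qed

lemma peval_const: "peval [:a:] M = mat a"
  by (simp add: peval_def)

lemma peval_pCons: "peval (pCons a p) M = mat a + M ** peval p M"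
proof -
  have "pCons a p = [:a:] + pCons 0 p" by simp
  then show ?thesis by (metis peval_add peval_const peval_pCons0)
qed

lemma peval_mult: "peval (p * q) M = peval p M ** peval q M"
proof (induction p rule: pCons_induct)
  case 0 then show ?case by simp
next
  case (pCons a p)
  have "peval (pCons a p * q) M = mat a ** peval q M + M ** (peval p M ** peval q M)"
    by (simp add: peval_add peval_smult peval_pCons0 pCons.IH)
  also have "\<dots> = peval (pCons a p) M ** peval q M"
    by (simp add: peval_pCons mm_add_r matrix_mul_assoc)
  finally show ?case .
qed

lemma peval_lin: "peval [:-z, 1:] M = M - mat z"
  by (simp add: peval_pCons peval_const mat_neg)

lemma peval_prod: "peval (\<Prod>i<d. f i) M = mprod d (\<lambda>i. peval (f i) M)"
proof (induction d)
  case 0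
  have "peval [:1:] M = mat 1" by (rule peval_const)
  then show ?case by (simp add: one_pCons)
qed (simp_all add: peval_mult)

lemma peval_monom: "peval (monom c k) M = mat c ** mpow M k"
proof (induction k)
  case 0 then show ?case by (simp add: peval_const monom_0)
next
  case (Suc k) then show ?case
    by (simp add: monom_Suc peval_pCons0 mat_comm_mid)
qed

lemma peval_sum: "finite S \<Longrightarrow> peval (\<Sum>i\<in>S. f i) M = (\<Sum>i\<in>S. peval (f i) M)"
  by (induction S rule: finite_induct) (auto simp: peval_add)


lemma mat_ofreal_mm: "(mat (complex_of_real a) :: complex^'m^'m) ** Y = a *\<^sub>R Y"
  by (simp add: mat_mm_l vec_eq_iff) (simp add: scaleR_conv_of_real)

lemma exists_annih:
  fixes G :: "complex^'r^'r"
  shows "\<exists>q. q \<noteq> 0 \<and> peval q G = 0"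
proof -
  define N where "N = DIM(complex^'r^'r)"
  show ?thesis
  proof (cases "inj_on (mpow G) {..N}")
    case False
    then obtain i j where ij: "i \<noteq> j" "mpow G i = mpow G j"
      by (auto simp: inj_on_def)
    define q where "q = monom 1 i + monom (-1::complex) j"
    have "coeff q i = 1" using ij by (simp add: q_def coeff_monom)
    then have "q \<noteq> 0" by auto
    moreover have "peval q G = 0"
      using ij by (simp add: q_def peval_add peval_monom mat_neg mm_neg_l)
    ultimately show ?thesis by blast
  next
    case True
    let ?S = "mpow G ` {..N}"
    have fin: "finite ?S" by simp
    have "card ?S = Suc N" using True by (simp add: card_image)
    then have "dependent ?S"
      using dependent_biggerset[of ?S] unfolding N_def by simp
    then obtain u v where v: "v \<in> ?S" "u v \<noteq> 0" and su: "(\<Sum>v\<in>?S. u v *\<^sub>R v) = 0"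
      using real_vector.dependent_finite[OF fin] by auto
    define q where "q = (\<Sum>k\<le>N. monom (complex_of_real (u (mpow G k))) k)"
    obtain k0 where k0: "k0 \<le> N" "v = mpow G k0" using v by auto
    have "coeff q k0 = complex_of_real (u (mpow G k0))"
      unfolding q_def coeff_sum using k0 by (simp add: coeff_monom)
    then have qn: "q \<noteq> 0" using v k0 by auto
    have "peval q G = (\<Sum>k\<le>N. u (mpow G k) *\<^sub>R mpow G k)"
      unfolding q_def by (simp add: peval_sum peval_monom mat_ofreal_mm)
    also have "\<dots> = (\<Sum>v\<in>?S. u v *\<^sub>R v)"
      using True by (simp add: sum.reindex)
    finally have "peval q G = 0" using su by simp
    with qn show ?thesis by blast
  qed
qed

lemma annih:
  fixes G :: "complex^'r^'r"
  shows "\<exists>d r. mprod d (\<lambda>i. G - mat (r i)) = 0"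
proof -
  obtain q where q: "q \<noteq> 0" "peval q G = 0" using exists_annih by blast
  obtain root where rt: "smult (lead_coeff q) (\<Prod>i<degree q. [:-root i, 1:]) = q"
    using complex_poly_decompose' by blast
  let ?P = "mprod (degree q) (\<lambda>i. G - mat (root i))"
  have "peval q G = mat (lead_coeff q) ** ?P"
    by (subst rt[symmetric]) (simp add: peval_smult peval_prod peval_lin)
  then have "mat (lead_coeff q) ** ?P = 0" using q by simp
  then have "mat (inverse (lead_coeff q)) ** (mat (lead_coeff q) ** ?P) = 0" by simp
  then have "?P = 0" using q by (simp add: matrix_mul_assoc flip: mat_mult)
  then show ?thesis by blast
qed

lemma mprod_comm:
  assumes "\<And>i. N ** f i = f i ** N"
  shows "N ** mprod d f = mprod d f ** N"
proof (induction d)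
  case (Suc d)
  have "N ** mprod (Suc d) f = (N ** mprod d f) ** f d" by (simp add: matrix_mul_assoc)
  also have "\<dots> = mprod d f ** (N ** f d)" by (simp add: Suc.IH matrix_mul_assoc)
  also have "\<dots> = mprod (Suc d) f ** N" by (simp add: assms matrix_mul_assoc)
  finally show ?case .
qed simp

lemma shift_comm: "((G::'a::comm_ring_1^'n^'n) - mat z) ** (G - mat w) = (G - mat w) ** (G - mat z)"
  by (simp add: mm_diff_l mm_diff_r mat_mm_l mat_mm_r) (simp add: vec_eq_iff mat_def algebra_simps)

lemma mat_rect_comm: "(X::'a::comm_semiring_1^'r^'n) ** mat z = mat z ** X"
  by (simp add: mat_mm_l mat_mm_r)

lemma core:
  fixes A :: "complex^'n^'n" and G :: "complex^'r^'r" and X :: "complex^'r^'n"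
  assumes AX: "A ** X = X ** G"
    and cond: "\<And>z. invertible (G - mat z) \<or> invertible (A - mat z)"
  shows "X = 0"
proof -
  obtain d r where d: "mprod d (\<lambda>i. G - mat (r i)) = 0" using annih by blast
  define f where "f = (\<lambda>i. G - mat (r i))"
  have "X ** mprod k f = 0 \<Longrightarrow> X = 0" for k
  proof (induction k)
    case 0 then show ?case by simp
  next
    case (Suc k)
    have eq: "(X ** mprod k f) ** f k = 0" using Suc.prems by (simp add: matrix_mul_assoc)
    show ?case
    proof (rule Suc.IH)
      from cond[of "r k"] show "X ** mprod k f = 0"
      proof
        assume "invertible (G - mat (r k))"
        then obtain Bi where "f k ** Bi = mat 1" by (auto simp: invertible_def f_def)
        then have "(X ** mprod k f) ** f k ** Bi = X ** mprod k f"
          by (metis matrix_mul_assoc matrix_mul_rid)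
        with eq show ?thesis by simp
      next
        assume "invertible (A - mat (r k))"
        then obtain Bi where Bi: "Bi ** (A - mat (r k)) = mat 1" by (auto simp: invertible_def)
        have "f k ** mprod k f = mprod k f ** f k"
          by (rule mprod_comm) (simp add: f_def shift_comm)
        have "X ** f k = (A - mat (r k)) ** X"
          by (simp add: f_def mm_diff_l mm_diff_r AX mat_rect_comm)
        have "(X ** mprod k f) ** f k = (A - mat (r k)) ** (X ** mprod k f)"
          by (metis \<open>X ** f k = (A - mat (r k)) ** X\<close> \<open>f k ** mprod k f = mprod k f ** f k\<close> matrix_mul_assoc)
        then have "Bi ** ((A - mat (r k)) ** (X ** mprod k f)) = 0" using eq by simp
        then show ?thesis using Bi by (simp add: matrix_mul_assoc)
      qed
    qed
  qed
  then show ?thesis using d unfolding f_def by (metis times0_right)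
qed

section \<open>Complexification and stability\<close>

definition cm :: "real^'c^'b \<Rightarrow> complex^'c^'b" where
  "cm A = map_matrix complex_of_real A"

lemma cm_mm: "cm (A ** B) = cm A ** cm B"
  by (simp add: cm_def vec_eq_iff matrix_matrix_mult_def)
lemma cm_add: "cm (A + B) = cm A + cm B"
  by (simp add: cm_def vec_eq_iff)
lemma cm_neg: "cm (- A) = - cm A"
  by (simp add: cm_def vec_eq_iff)
lemma cm_0: "cm 0 = 0"
  by (simp add: cm_def vec_eq_iff)
lemma cm_transpose: "cm (transpose A) = transpose (cm A)"
  by (simp add: cm_def vec_eq_iff transpose_def)
lemma cm_eq0: "cm X = 0 \<Longrightarrow> X = 0"
  by (simp add: cm_def vec_eq_iff)

definition stab :: "real^'n^'n \<Rightarrow> bool" where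
  "stab A \<longleftrightarrow> (\<forall>z. 0 \<le> Re z \<longrightarrow> invertible (cm A - mat z))"

lemma noninv_ker:
  fixes N :: "complex^'n^'n"
  assumes "\<not> invertible N"
  shows "\<exists>v. v \<noteq> 0 \<and> N *v v = 0"
proof -
  have "det N = 0" using assms invertible_det_nz by blast
  then have "\<not> inj ((*v) N)"
    using det_nz_iff_inj_gen[OF matrix_vector_mul_linear_gen[of N]] by simp
  then obtain x y where "x \<noteq> y" "N *v x = N *v y" by (auto simp: inj_def)
  then have "x - y \<noteq> 0" "N *v (x - y) = 0" by (auto simp: matrix_vector_mult_diff_distrib)
  then show ?thesis by blast
qed

lemma mat_mv: "(mat z :: 'a::comm_semiring_1^'n^'n) *v v = z *s v"
  unfolding matrix_vector_mult_def mat_def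
  by (auto simp: vec_eq_iff if_distrib if_distribR sum.delta cong: if_cong)

lemma hurwitz_stab: "hurwitz A \<Longrightarrow> stab A"
  unfolding stab_def
proof (intro allI impI)
  fix z :: complex
  assume h: "hurwitz A" and z: "0 \<le> Re z"
  show "invertible (cm A - mat z)"
  proof (rule ccontr)
    assume "\<not> invertible (cm A - mat z)"
    then obtain v where v: "v \<noteq> 0" "(cm A - mat z) *v v = 0" using noninv_ker by blast
    then have "map_matrix complex_of_real A *v v = z *s v"
      by (simp add: cm_def matrix_vector_mult_diff_rdistrib mat_mv)
    then have "Re z < 0" using h v unfolding hurwitz_def by blast
    with z show False by simp
  qed
qed

lemma invertible_transpose_c: "invertible (N::complex^'n^'n) \<Longrightarrow> invertible (transpose N)"
  by (simp add: invertible_det_nz)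

lemma invertible_neg: "invertible (N::'a::ring_1^'n^'n) \<Longrightarrow> invertible (- N)"
  unfolding invertible_def by (metis mm_neg_l mm_neg_r minus_minus)

lemma stab_T: "stab A \<Longrightarrow> stab (transpose A)"
  unfolding stab_def
proof (intro allI impI)
  fix z :: complex
  assume "\<forall>z. 0 \<le> Re z \<longrightarrow> invertible (cm A - mat z)" "0 \<le> Re z"
  then have "invertible (transpose (cm A - mat z))" using invertible_transpose_c by blast
  then show "invertible (cm (transpose A) - mat z)" by (simp add: cm_transpose tr_diff)
qed

lemma syl:
  fixes A :: "real^'n^'n" and B :: "real^'r^'r" and X :: "real^'r^'n"
  assumes sA: "stab A" and sB: "stab B" and eq: "A ** X + X ** transpose B = 0"
  shows "X = 0"
proof -
  let ?G = "- transpose (cm B)"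
  have "cm (A ** X + X ** transpose B) = 0" using eq by (simp add: cm_0)
  then have "cm A ** cm X = cm X ** ?G"
    by (simp add: cm_add cm_mm cm_transpose mm_neg_r add_eq_0_iff)
  moreover have "invertible (?G - mat z) \<or> invertible (cm A - mat z)" for z
  proof (cases "0 \<le> Re z")
    case True then show ?thesis using sA by (simp add: stab_def)
  next
    case False
    then have "invertible (cm (transpose B) - mat (- z))"
      using stab_T[OF sB] by (simp add: stab_def)
    then have "invertible (- (cm (transpose B) - mat (- z)))" by (rule invertible_neg)
    then show ?thesis by (simp add: mat_neg cm_transpose)
  qed
  ultimately have "cm X = 0" by (rule core)
  then show ?thesis by (rule cm_eq0)
qed


lemma aux3: "a + b + c = (0::'a::ab_group_add) \<Longrightarrow> a = - c - b"
proof -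
  assume h: "a + b + c = 0"
  have "a = (a + b + c) - c - b" by simp
  then show ?thesis using h by simp
qed

lemma GL:
  fixes Sz So :: "'v::euclidean_space \<Rightarrow> 'v" and F :: "real \<Rightarrow> 'v \<Rightarrow> 'v"
  assumes l0: "linear Sz" and l1: "linear So" and inj0: "\<And>y. Sz y = 0 \<Longrightarrow> y = 0"
    and F: "\<And>t y. F t y = Sz y + t *\<^sub>R So y + (Ra + t *\<^sub>R Rb + t\<^sup>2 *\<^sub>R Rc)"
    and xz: "Sz xz + Ra = 0"
  shows "\<exists>x1. Sz x1 + So xz + Rb = 0 \<and> (THE y. F 0 y = 0) = xz \<and>
           ((\<lambda>t. THE y. F t y = 0) has_vector_derivative x1) (at 0)"
proof -
  have inj: "inj Sz" using inj0 l0 by (simp add: linear_injective_0)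
  obtain c where c: "c > 0" "\<And>y. c * norm y \<le> norm (Sz y)"
    using linear_inj_bounded_below_pos[OF l0 inj] by blast
  obtain d where d: "d > 0" "\<And>y. norm (So y) \<le> d * norm y"
    using linear_bounded_pos[OF l1] by blast
  have "surj Sz" using linear_injective_imp_surjective[OF l0 inj] by simp
  then obtain x1 where x1: "Sz x1 = - (So xz + Rb)" by (metis surjD)
  define \<delta> where "\<delta> = c / (2*d)"
  have \<delta>: "\<delta> > 0" using c d by (simp add: \<delta>_def)
  have below: "c/2 * norm y \<le> norm (Sz y + t *\<^sub>R So y)" if t: "\<bar>t\<bar> < \<delta>" for t y
  proof -
    have "\<bar>t\<bar> * d \<le> c/2" using t d by (simp add: \<delta>_def field_simps)
    then have "\<bar>t\<bar> * (d * norm y) \<le> c/2 * norm y"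
      by (metis mult.assoc mult_right_mono norm_ge_zero)
    moreover have "norm (t *\<^sub>R So y) \<le> \<bar>t\<bar> * (d * norm y)"
      using d(2)[of y] by (simp add: mult_left_mono)
    moreover have "norm (Sz y) - norm (t *\<^sub>R So y) \<le> norm (Sz y + t *\<^sub>R So y)"
      by (rule norm_diff_ineq)
    ultimately show ?thesis using c(2)[of y] by linarith
  qed
  have uniq: "\<exists>!y. F t y = 0" if t: "\<bar>t\<bar> < \<delta>" for t
  proof -
    let ?L = "\<lambda>y. Sz y + t *\<^sub>R So y"
    have lL: "linear ?L" by (rule linearI) (simp_all add: linear_add[OF l0] linear_add[OF l1]
      linear_scale[OF l0] linear_scale[OF l1] algebra_simps)
    have iL: "?L y = 0 \<Longrightarrow> y = 0" for y
    proof -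
      assume "?L y = 0"
      then have "c/2 * norm y \<le> 0" using below[OF t, of y] by simp
      then have "norm y \<le> 0" using c(1) by (metis half_gt_zero mult_le_0_iff not_le order_less_imp_le)
      then show "y = 0" by simp
    qed
    then have "inj ?L" unfolding linear_injective_0[OF lL] by blast
    then have "surj ?L" by (intro linear_injective_imp_surjective[OF lL]) simp_all
    from surjD[OF this, of "- (Ra + t *\<^sub>R Rb + t\<^sup>2 *\<^sub>R Rc)"]
    obtain y where y: "?L y = - (Ra + t *\<^sub>R Rb + t\<^sup>2 *\<^sub>R Rc)" by force
    show ?thesis
    proof
      have "F t y = ?L y + (Ra + t *\<^sub>R Rb + t\<^sup>2 *\<^sub>R Rc)" by (simp only: F add.assoc)
      then show "F t y = 0" using y by simp
    next
      fix z assume "F t z = 0"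
      moreover have "F t z = ?L z + (Ra + t *\<^sub>R Rb + t\<^sup>2 *\<^sub>R Rc)" by (simp only: F add.assoc)
      ultimately have "?L z = - (Ra + t *\<^sub>R Rb + t\<^sup>2 *\<^sub>R Rc)"
        by (simp only: eq_neg_iff_add_eq_0)
      then have "?L z = ?L y" using y by simp
      then have "?L (z - y) = 0" using linear_diff[OF lL, of z y] by simp
      then have "z - y = 0" by (rule iL)
      then show "z = y" by simp
    qed
  qed
  define y where "y t = (THE y. F t y = 0)" for t
  have Fy: "F t (y t) = 0" if "\<bar>t\<bar> < \<delta>" for t
    unfolding y_def using theI'[OF uniq[OF that]] .
  have y0: "y 0 = xz"
  proof -
    have "F 0 xz = 0" using xz by (simp add: F)
    then show ?thesis unfolding y_def using uniq[of 0] \<delta> by (simp add: the1_equality)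
  qed
  define K where "K = norm (Rc + So x1)"
  have est: "c/2 * norm (y t - xz - t *\<^sub>R x1) \<le> t\<^sup>2 * K" if t: "\<bar>t\<bar> < \<delta>" for t
  proof -
    let ?e = "y t - xz - t *\<^sub>R x1"
    have a: "Sz (y t) = - (Ra + t *\<^sub>R Rb + t\<^sup>2 *\<^sub>R Rc) - t *\<^sub>R So (y t)"
      using Fy[OF t] unfolding F by (rule aux3)
    have e0: "Sz ?e = Sz (y t) - Sz xz - t *\<^sub>R Sz x1"
      by (simp add: linear_diff[OF l0] linear_scale[OF l0])
    have e1: "So ?e = So (y t) - So xz - t *\<^sub>R So x1"
      by (simp add: linear_diff[OF l1] linear_scale[OF l1])
    have xz': "Sz xz = - Ra" using xz by (simp only: eq_neg_iff_add_eq_0)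
    have "Sz ?e + t *\<^sub>R So ?e = - (t\<^sup>2 *\<^sub>R (Rc + So x1))"
      unfolding e0 e1 a xz' x1 by (simp add: algebra_simps power2_eq_square)
    then have "norm (Sz ?e + t *\<^sub>R So ?e) = t\<^sup>2 * K" by (simp add: K_def)
    then show ?thesis using below[OF t, of ?e] by simp
  qed
  have "((\<lambda>h. norm (y (0 + h) - y 0 - h *\<^sub>R x1) / norm h) \<longlongrightarrow> 0) (at 0)"
  proof (rule Lim_null_comparison)
    show "\<forall>\<^sub>F h in at 0. norm (norm (y (0 + h) - y 0 - h *\<^sub>R x1) / norm h) \<le> (2 / c * K) * \<bar>h\<bar>"
      unfolding eventually_at
    proof (intro exI[of _ \<delta>] conjI ballI impI allI)
      fix h :: real assume h: "h \<noteq> 0 \<and> dist h 0 < \<delta>"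
      then have "c/2 * norm (y h - xz - h *\<^sub>R x1) \<le> h\<^sup>2 * K" using est by simp
      then have "norm (y h - xz - h *\<^sub>R x1) \<le> (2/c) * (h\<^sup>2 * K)"
        using c by (simp add: field_simps)
      then have "norm (y h - xz - h *\<^sub>R x1) / \<bar>h\<bar> \<le> (2/c) * (h\<^sup>2 * K) / \<bar>h\<bar>"
        by (rule divide_right_mono) simp
      also have "\<dots> = (2 / c * K) * \<bar>h\<bar>"
      proof -
        have "h\<^sup>2 = \<bar>h\<bar> * \<bar>h\<bar>" by (simp add: power2_eq_square abs_mult_self_eq)
        then show ?thesis using h c by (simp add: field_simps)
      qed
      finally show "norm (norm (y (0 + h) - y 0 - h *\<^sub>R x1) / norm h) \<le> (2 / c * K) * \<bar>h\<bar>"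
        by (simp add: y0)
    qed (rule \<delta>)
    have "((\<lambda>h. (2 / c * K) * \<bar>h\<bar>) \<longlongrightarrow> (2 / c * K) * \<bar>0::real\<bar>) (at 0)"
      by (intro tendsto_intros)
    then show "((\<lambda>h. (2 / c * K) * \<bar>h\<bar>) \<longlongrightarrow> 0) (at 0)" by simp
  qed
  then have "(y has_derivative (\<lambda>h. h *\<^sub>R x1)) (at 0)"
    unfolding has_derivative_at by (simp add: bounded_linear_scaleR_left)
  then have "(y has_vector_derivative x1) (at 0)"
    by (simp add: has_vector_derivative_def)
  moreover have "Sz x1 + So xz + Rb = 0" using x1 by (simp add: algebra_simps)
  ultimately show ?thesis using y0 unfolding y_def by blast
qed


lemma mm_scale_l: "(k *\<^sub>R (A::real^'n^'m)) ** B = k *\<^sub>R (A ** B)"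
  by (simp add: scalar_matrix_assoc)
lemma mm_scale_r: "(A::real^'n^'m) ** (k *\<^sub>R B) = k *\<^sub>R (A ** B)"
  by (simp add: matrix_scalar_ac scalar_matrix_assoc)

lemma trace_transpose: "trace (transpose (A::'a::semiring_1^'n^'n)) = trace A"
  by (simp add: trace_def transpose_def)
lemma trace_scale: "trace (k *\<^sub>R (A::real^'n^'n)) = k * trace A"
  by (simp add: trace_def sum_distrib_left)
lemma trace_neg: "trace (- (A::real^'n^'n)) = - trace A"
  by (simp add: trace_def sum_negf)
lemma trace_zero: "trace (0::real^'n^'n) = 0"
  by (simp add: trace_def)

lemma linear_mm_r: "linear (\<lambda>B. (A::real^'n^'m) ** (B::real^'p^'n))"
  by (rule linearI) (simp_all add: matrix_add_ldistrib mm_scale_r)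
lemma linear_mm_l: "linear (\<lambda>A. (A::real^'n^'m) ** (B::real^'p^'n))"
  by (rule linearI) (simp_all add: mm_add_r mm_scale_l)

lemma bb_mm: "bounded_bilinear (\<lambda>(A::real^'n^'m) (B::real^'p^'n). A ** B)"
proof -
  have "bilinear (\<lambda>(A::real^'n^'m) (B::real^'p^'n). A ** B)"
    unfolding bilinear_def using linear_mm_r linear_mm_l by blast
  then show ?thesis by (simp add: bilinear_conv_bounded_bilinear)
qed

lemma bl_trace: "bounded_linear (trace :: real^'n^'n \<Rightarrow> real)"
proof -
  have "linear (trace :: real^'n^'n \<Rightarrow> real)"
    by (rule linearI) (simp_all add: trace_add trace_scale)
  then show ?thesis by (simp add: linear_conv_bounded_linear)
qed

lemma bl_transpose: "bounded_linear (transpose :: real^'n^'m \<Rightarrow> real^'m^'n)"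
proof -
  have "linear (transpose :: real^'n^'m \<Rightarrow> real^'m^'n)"
    by (rule linearI) (simp_all add: tr_add transpose_scalar)
  then show ?thesis by (simp add: linear_conv_bounded_linear)
qed

lemma mm_vd:
  fixes f :: "real \<Rightarrow> real^'n^'m" and g :: "real \<Rightarrow> real^'p^'n"
  assumes "(f has_vector_derivative f') (at x within s)" "(g has_vector_derivative g') (at x within s)"
    and "D = f x ** g' + f' ** g x"
  shows "((\<lambda>x. f x ** g x) has_vector_derivative D) (at x within s)"
  using bounded_bilinear.has_vector_derivative[OF bb_mm assms(1,2)] assms(3) by simp

lemma trace_vd:
  fixes f :: "real \<Rightarrow> real^'n^'n"
  assumes "(f has_vector_derivative f') F" "D = trace f'"
  shows "((\<lambda>x. trace (f x)) has_vector_derivative D) F"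
  using bounded_linear.has_vector_derivative[OF bl_trace assms(1)] assms(2) by simp

lemma transpose_vd:
  fixes f :: "real \<Rightarrow> real^'n^'m"
  assumes "(f has_vector_derivative f') F" "D = transpose f'"
  shows "((\<lambda>x. transpose (f x)) has_vector_derivative D) F"
  using bounded_linear.has_vector_derivative[OF bl_transpose assms(1)] assms(2) by simp

lemma const_vd: "D = 0 \<Longrightarrow> ((\<lambda>x. c) has_vector_derivative D) F"
  by simp

lemma add_vd: "(f has_vector_derivative f') F \<Longrightarrow> (g has_vector_derivative g') F \<Longrightarrow> D = f' + g' \<Longrightarrow>
    ((\<lambda>x. f x + g x) has_vector_derivative D) F"
  using has_vector_derivative_add by blast

lemma diff_vd: "(f has_vector_derivative f') F \<Longrightarrow> (g has_vector_derivative g') F \<Longrightarrow> D = f' - g' \<Longrightarrow>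
    ((\<lambda>x. f x - g x) has_vector_derivative D) F"
  using has_vector_derivative_diff by blast

lemma scale_vd: "(f has_vector_derivative f') F \<Longrightarrow> D = k *\<^sub>R f' \<Longrightarrow>
    ((\<lambda>x. k *\<^sub>R f x) has_vector_derivative D) F"
  using bounded_linear.has_vector_derivative[OF bounded_linear_scaleR_right] by blast

lemma rmult_vd: "(f has_vector_derivative f') F \<Longrightarrow> D = k * f' \<Longrightarrow>
    ((\<lambda>x. k * f x :: real) has_vector_derivative D) F"
  using has_vector_derivative_mult_right by blast

lemma lin_vd: "((\<lambda>t. V + t *\<^sub>R E) has_vector_derivative E) F"
proof -
  have "((\<lambda>t. V + t *\<^sub>R E) has_derivative (\<lambda>h. h *\<^sub>R E)) F"
    by (auto intro!: derivative_eq_intros)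
  then show ?thesis by (simp add: has_vector_derivative_def)
qed

lemma trace_E_left: "trace (transpose (ematrix i j :: real^'r^'n) ** Z) = Z $ i $ j"
proof -
  have "(\<Sum>ia\<in>UNIV. \<Sum>k\<in>UNIV. if k = i \<and> ia = j then Z $ i $ j else 0) =
        (\<Sum>ia\<in>UNIV. if ia = j then Z $ i $ j else 0)"
    by (intro sum.cong refl) (auto simp: sum.delta)
  also have "\<dots> = Z $ i $ j" by simp
  finally show ?thesis
    unfolding trace_def matrix_matrix_mult_def transpose_def ematrix_def
    by (simp add: if_distrib if_distribR sum.delta cong: if_cong)
qed

lemma trace_cyc: "trace ((A::real^'n^'m) ** B ** C) = trace (C ** A ** B)"
  by (metis matrix_mul_assoc trace_mul_sym)


lemma trace_tr: "trace ((Y::real^'n^'r) ** (Z::real^'r^'n)) = trace (transpose Z ** transpose Y)"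
  by (metis matrix_transpose_mul trace_transpose)

lemma eq_from4: "a + b - c - d = (0::'a::ab_group_add) \<Longrightarrow> a + b = c + d"
  by (simp add: algebra_simps)
lemma eq_from4': "a + b + c + d = (0::'a::ab_group_add) \<Longrightarrow> a + b = - (c + d)"
  by (simp add: algebra_simps eq_neg_iff_add_eq_0)

lemma alg_W:
  fixes A M :: "real^'n^'n" and B :: "real^'m^'n" and C :: "real^'n^1"
    and W V X K X1 E :: "real^'r^'n" and Ah Ph L Mh Ph1 :: "real^'r^'r"
    and Bh :: "real^'m^'r" and Ch :: "real^'r^1"
  assumes hM: "transpose M = M" and hMh: "transpose Mh = Mh" and hPs: "transpose Ph = Ph"
    and hLs: "transpose L = L" and hBh: "Bh = transpose W ** B"
    and hK: "transpose A ** K + K ** Ah - transpose C ** Ch - 2 *\<^sub>R (M ** X ** Mh) = 0"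
    and hL: "transpose Ah ** L + L ** Ah + transpose Ch ** Ch + 2 *\<^sub>R (Mh ** Ph ** Mh) = 0"
    and hX1: "A ** X1 + X1 ** transpose Ah + X ** transpose (transpose E ** A ** V)
              + B ** transpose (transpose E ** B) = 0"
    and hPh1: "Ah ** Ph1 + Ph1 ** transpose Ah
              + (transpose E ** A ** V ** Ph + Ph ** transpose (transpose E ** A ** V))
              + (Bh ** transpose (transpose E ** B) + transpose E ** B ** transpose Bh) = 0"
  shows "- 2 * trace (C ** X1 ** transpose Ch) + trace (Ch ** Ph1 ** transpose Ch)
         - 2 * (trace (transpose X1 ** M ** X ** Mh) + trace (transpose X ** M ** X1 ** Mh))
         + (trace (Ph1 ** Mh ** Ph ** Mh) + trace (Ph ** Mh ** Ph1 ** Mh))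
       = trace (transpose E ** (2 *\<^sub>R (A ** V ** (transpose X ** K + Ph ** L)
                  + B ** transpose B ** (K + W ** L))))"
proof -
  let ?T = "\<lambda>Z::real^'r^'n. trace (transpose E ** Z)"
  note as = matrix_mul_assoc
  note ms = matrix_add_ldistrib mm_add_r mm_scale_l mm_scale_r matrix_mul_assoc
            tr_add transpose_scalar matrix_transpose_mul trace_add trace_scale
  have a: "trace (C ** X1 ** transpose Ch) = trace (transpose Ch ** C ** X1)"
    by (rule trace_cyc)
  have b: "trace (transpose X ** M ** X1 ** Mh) = trace (Mh ** transpose X ** M ** X1)"
    by (subst trace_mul_sym) (simp add: as)
  have c: "trace (transpose X1 ** M ** X ** Mh) = trace (Mh ** transpose X ** M ** X1)"
    by (subst trace_transpose[symmetric]) (simp add: matrix_transpose_mul hM hMh as)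
  have kk: "transpose A ** K + K ** Ah = transpose C ** Ch + 2 *\<^sub>R (M ** X ** Mh)"
    using hK by (rule eq_from4)
  have kkT: "transpose K ** A + transpose Ah ** transpose K = transpose Ch ** C + 2 *\<^sub>R (Mh ** transpose X ** M)"
  proof -
    have "transpose (transpose A ** K + K ** Ah) = transpose (transpose C ** Ch + 2 *\<^sub>R (M ** X ** Mh))"
      by (simp only: kk)
    then show ?thesis by (simp add: tr_add transpose_scalar matrix_transpose_mul hM hMh as)
  qed
  have d: "trace (transpose K ** (A ** X1 + X1 ** transpose Ah))
           = trace (transpose Ch ** C ** X1) + 2 * trace (Mh ** transpose X ** M ** X1)"
  proof -
    have "trace (transpose K ** (A ** X1 + X1 ** transpose Ah))
          = trace (transpose K ** A ** X1) + trace (transpose K ** X1 ** transpose Ah)"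
      by (simp add: matrix_add_ldistrib trace_add as)
    also have "trace (transpose K ** X1 ** transpose Ah) = trace (transpose Ah ** transpose K ** X1)"
      by (rule trace_cyc)
    also have "trace (transpose K ** A ** X1) + trace (transpose Ah ** transpose K ** X1)
          = trace ((transpose K ** A + transpose Ah ** transpose K) ** X1)"
      by (simp add: mm_add_r trace_add)
    also have "\<dots> = trace (transpose Ch ** C ** X1) + 2 * trace (Mh ** transpose X ** M ** X1)"
      unfolding kkT by (simp add: mm_add_r trace_add mm_scale_l trace_scale)
    finally show ?thesis .
  qed
  have e: "A ** X1 + X1 ** transpose Ah
           = - (X ** transpose (transpose E ** A ** V) + B ** transpose (transpose E ** B))"
    using hX1 by (rule eq_from4')
  have f1: "trace (transpose K ** (X ** transpose (transpose E ** A ** V))) = ?T (A ** V ** (transpose X ** K))"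
  proof -
    have "trace (transpose K ** (X ** transpose (transpose E ** A ** V)))
          = trace ((transpose K ** X ** transpose V ** transpose A) ** E)"
      by (simp add: matrix_transpose_mul as)
    also have "\<dots> = ?T (transpose (transpose K ** X ** transpose V ** transpose A))"
      by (rule trace_tr)
    also have "\<dots> = ?T (A ** V ** (transpose X ** K))"
      by (simp add: matrix_transpose_mul as)
    finally show ?thesis .
  qed
  have f2: "trace (transpose K ** (B ** transpose (transpose E ** B))) = ?T (B ** transpose B ** K)"
  proof -
    have "trace (transpose K ** (B ** transpose (transpose E ** B)))
          = trace ((transpose K ** B ** transpose B) ** E)"
      by (simp add: matrix_transpose_mul as)
    also have "\<dots> = ?T (transpose (transpose K ** B ** transpose B))"
      by (rule trace_tr)
    also have "\<dots> = ?T (B ** transpose B ** K)"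
      by (simp add: matrix_transpose_mul as)
    finally show ?thesis .
  qed
  have partX: "- 2 * trace (C ** X1 ** transpose Ch)
         - 2 * (trace (transpose X1 ** M ** X ** Mh) + trace (transpose X ** M ** X1 ** Mh))
         = 2 * ?T (A ** V ** (transpose X ** K)) + 2 * ?T (B ** transpose B ** K)"
  proof -
    have "- 2 * trace (C ** X1 ** transpose Ch)
         - 2 * (trace (transpose X1 ** M ** X ** Mh) + trace (transpose X ** M ** X1 ** Mh))
         = - 2 * trace (transpose K ** (A ** X1 + X1 ** transpose Ah))"
      unfolding a b c d by simp
    also have "\<dots> = 2 * trace (transpose K ** (X ** transpose (transpose E ** A ** V)))
                   + 2 * trace (transpose K ** (B ** transpose (transpose E ** B)))"
      unfolding e by (simp add: mm_neg_r trace_neg matrix_add_ldistrib trace_add mm_diff_l trace_sub)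
    finally show ?thesis unfolding f1 f2 .
  qed
  have g1: "trace (Ch ** Ph1 ** transpose Ch) = trace (transpose Ch ** Ch ** Ph1)"
    by (rule trace_cyc)
  have g2: "trace (Ph1 ** Mh ** Ph ** Mh) = trace (Mh ** Ph ** Mh ** Ph1)"
    by (subst trace_mul_sym) (simp add: as)
  have g3: "trace (Ph ** Mh ** Ph1 ** Mh) = trace (Mh ** Ph ** Mh ** Ph1)"
    by (subst trace_mul_sym) (simp add: as)
  have ll: "transpose Ch ** Ch + 2 *\<^sub>R (Mh ** Ph ** Mh) = - (transpose Ah ** L + L ** Ah)"
    using hL by (simp add: algebra_simps eq_neg_iff_add_eq_0)
  have g4: "trace ((transpose Ah ** L + L ** Ah) ** Ph1) = trace (L ** (Ah ** Ph1 + Ph1 ** transpose Ah))"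
  proof -
    have "trace (transpose Ah ** L ** Ph1) = trace (L ** Ph1 ** transpose Ah)"
      by (subst trace_mul_sym) (simp add: as)
    then show ?thesis by (simp add: mm_add_r matrix_add_ldistrib trace_add as)
  qed
  have h: "Ah ** Ph1 + Ph1 ** transpose Ah
         = - ((transpose E ** A ** V ** Ph + Ph ** transpose (transpose E ** A ** V))
              + (Bh ** transpose (transpose E ** B) + transpose E ** B ** transpose Bh))"
    using hPh1 by (simp add: algebra_simps eq_neg_iff_add_eq_0)
  have i1: "trace (L ** (transpose E ** A ** V ** Ph)) = ?T (A ** V ** (Ph ** L))"
    by (subst trace_mul_sym) (simp add: as)
  have i2: "trace (L ** (Ph ** transpose (transpose E ** A ** V))) = ?T (A ** V ** (Ph ** L))"
  proof -
    have "trace (L ** (Ph ** transpose (transpose E ** A ** V)))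
          = trace ((L ** Ph ** transpose V ** transpose A) ** E)"
      by (simp add: matrix_transpose_mul as)
    also have "\<dots> = ?T (transpose (L ** Ph ** transpose V ** transpose A))"
      by (rule trace_tr)
    also have "\<dots> = ?T (A ** V ** (Ph ** L))"
      by (simp add: matrix_transpose_mul as hPs hLs)
    finally show ?thesis .
  qed
  have i3: "trace (L ** (Bh ** transpose (transpose E ** B))) = ?T (B ** transpose B ** (W ** L))"
  proof -
    have "trace (L ** (Bh ** transpose (transpose E ** B)))
          = trace ((L ** Bh ** transpose B) ** E)"
      by (simp add: matrix_transpose_mul as)
    also have "\<dots> = ?T (transpose (L ** Bh ** transpose B))"
      by (rule trace_tr)
    also have "\<dots> = ?T (B ** transpose B ** (W ** L))"
      by (simp add: matrix_transpose_mul as hLs hBh)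
    finally show ?thesis .
  qed
  have i4: "trace (L ** (transpose E ** B ** transpose Bh)) = ?T (B ** transpose B ** (W ** L))"
    by (subst trace_mul_sym) (simp add: as hBh matrix_transpose_mul)
  have partP: "trace (Ch ** Ph1 ** transpose Ch) + (trace (Ph1 ** Mh ** Ph ** Mh) + trace (Ph ** Mh ** Ph1 ** Mh))
         = 2 * ?T (A ** V ** (Ph ** L)) + 2 * ?T (B ** transpose B ** (W ** L))"
  proof -
    have "trace (Ch ** Ph1 ** transpose Ch) + (trace (Ph1 ** Mh ** Ph ** Mh) + trace (Ph ** Mh ** Ph1 ** Mh))
          = trace ((transpose Ch ** Ch + 2 *\<^sub>R (Mh ** Ph ** Mh)) ** Ph1)"
      unfolding g1 g2 g3 by (simp add: mm_add_r trace_add mm_scale_l trace_scale)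
    also have "\<dots> = - trace (L ** (Ah ** Ph1 + Ph1 ** transpose Ah))"
      unfolding ll g4[symmetric] by (simp only: mm_neg_l trace_neg)
    also have "\<dots> = trace (L ** (transpose E ** A ** V ** Ph)) + trace (L ** (Ph ** transpose (transpose E ** A ** V)))
        + (trace (L ** (Bh ** transpose (transpose E ** B))) + trace (L ** (transpose E ** B ** transpose Bh)))"
      unfolding h by (simp add: mm_neg_r trace_neg matrix_add_ldistrib trace_add mm_diff_l trace_sub)
    finally show ?thesis unfolding i1 i2 i3 i4 by simp
  qed
  have fin: "?T (2 *\<^sub>R (A ** V ** (transpose X ** K + Ph ** L) + B ** transpose B ** (K + W ** L)))
     = 2 * ?T (A ** V ** (transpose X ** K)) + 2 * ?T (B ** transpose B ** K)
       + (2 * ?T (A ** V ** (Ph ** L)) + 2 * ?T (B ** transpose B ** (W ** L)))"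
    by (simp add: matrix_add_ldistrib mm_scale_r trace_add trace_scale algebra_simps)
  show ?thesis unfolding fin using partX partP by linarith
qed


lemma alg_V:
  fixes A M :: "real^'n^'n" and B :: "real^'m^'n" and C :: "real^'n^1"
    and W V X K X1 E :: "real^'r^'n" and Ah Ph L Mh Ph1 :: "real^'r^'r"
    and Ch :: "real^'r^1"
  assumes hM: "transpose M = M" and hMh: "transpose Mh = Mh" and hPs: "transpose Ph = Ph"
    and hLs: "transpose L = L" and hCh: "Ch = C ** V"
    and hK: "transpose A ** K + K ** Ah - transpose C ** Ch - 2 *\<^sub>R (M ** X ** Mh) = 0"
    and hL: "transpose Ah ** L + L ** Ah + transpose Ch ** Ch + 2 *\<^sub>R (Mh ** Ph ** Mh) = 0"
    and hX1: "A ** X1 + X1 ** transpose Ah + X ** transpose (transpose W ** A ** E) = 0"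
    and hPh1: "Ah ** Ph1 + Ph1 ** transpose Ah
              + (transpose W ** A ** E ** Ph + Ph ** transpose (transpose W ** A ** E)) = 0"
  shows "- 2 * (trace (C ** X1 ** transpose Ch) + trace (C ** X ** transpose (C ** E)))
     + (trace (C ** E ** Ph ** transpose Ch) + trace (Ch ** Ph1 ** transpose Ch) + trace (Ch ** Ph ** transpose (C ** E)))
     - 2 * (trace (transpose X1 ** M ** X ** Mh) + trace (transpose X ** M ** X1 ** Mh)
            + trace (transpose X ** M ** X ** (transpose E ** M ** V + transpose V ** M ** E)))
     + (trace (Ph1 ** Mh ** Ph ** Mh) + trace (Ph ** (transpose E ** M ** V + transpose V ** M ** E) ** Ph ** Mh)
        + trace (Ph ** Mh ** Ph1 ** Mh) + trace (Ph ** Mh ** Ph ** (transpose E ** M ** V + transpose V ** M ** E)))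
   = trace (transpose E ** (2 *\<^sub>R (transpose A ** W ** (transpose K ** X + L ** Ph)
                  + transpose C ** C ** (V ** Ph - X)
                  + 2 *\<^sub>R (M ** V ** (Ph ** Mh ** Ph - transpose X ** M ** X)))))"
proof -
  let ?T = "\<lambda>Z::real^'r^'n. trace (transpose E ** Z)"
  note as = matrix_mul_assoc
  have a: "trace (C ** X1 ** transpose Ch) = trace (transpose Ch ** C ** X1)"
    by (rule trace_cyc)
  have b: "trace (transpose X ** M ** X1 ** Mh) = trace (Mh ** transpose X ** M ** X1)"
    by (subst trace_mul_sym) (simp add: as)
  have c: "trace (transpose X1 ** M ** X ** Mh) = trace (Mh ** transpose X ** M ** X1)"
    by (subst trace_transpose[symmetric]) (simp add: matrix_transpose_mul hM hMh as)
  have kk: "transpose A ** K + K ** Ah = transpose C ** Ch + 2 *\<^sub>R (M ** X ** Mh)"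
    using hK by (rule eq_from4)
  have kkT: "transpose K ** A + transpose Ah ** transpose K = transpose Ch ** C + 2 *\<^sub>R (Mh ** transpose X ** M)"
  proof -
    have "transpose (transpose A ** K + K ** Ah) = transpose (transpose C ** Ch + 2 *\<^sub>R (M ** X ** Mh))"
      by (simp only: kk)
    then show ?thesis by (simp add: tr_add transpose_scalar matrix_transpose_mul hM hMh as)
  qed
  have d: "trace (transpose K ** (A ** X1 + X1 ** transpose Ah))
           = trace (transpose Ch ** C ** X1) + 2 * trace (Mh ** transpose X ** M ** X1)"
  proof -
    have "trace (transpose K ** (A ** X1 + X1 ** transpose Ah))
          = trace (transpose K ** A ** X1) + trace (transpose K ** X1 ** transpose Ah)"
      by (simp add: matrix_add_ldistrib trace_add as)
    also have "trace (transpose K ** X1 ** transpose Ah) = trace (transpose Ah ** transpose K ** X1)"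
      by (rule trace_cyc)
    also have "trace (transpose K ** A ** X1) + trace (transpose Ah ** transpose K ** X1)
          = trace ((transpose K ** A + transpose Ah ** transpose K) ** X1)"
      by (simp add: mm_add_r trace_add)
    also have "\<dots> = trace (transpose Ch ** C ** X1) + 2 * trace (Mh ** transpose X ** M ** X1)"
      unfolding kkT by (simp add: mm_add_r trace_add mm_scale_l trace_scale)
    finally show ?thesis .
  qed
  have e: "A ** X1 + X1 ** transpose Ah = - (X ** transpose (transpose W ** A ** E))"
    using hX1 by (simp add: eq_neg_iff_add_eq_0)
  have f1: "trace (transpose K ** (X ** transpose (transpose W ** A ** E))) = ?T (transpose A ** W ** (transpose K ** X))"
  proof -
    have "trace (transpose K ** (X ** transpose (transpose W ** A ** E)))
          = trace ((transpose K ** X) ** (transpose E ** (transpose A ** W)))"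
      by (simp add: matrix_transpose_mul as)
    also have "\<dots> = ?T (transpose A ** W ** (transpose K ** X))"
      by (subst trace_mul_sym) (simp add: as)
    finally show ?thesis .
  qed
  have partX1: "- 2 * trace (C ** X1 ** transpose Ch)
         - 2 * (trace (transpose X1 ** M ** X ** Mh) + trace (transpose X ** M ** X1 ** Mh))
         = 2 * ?T (transpose A ** W ** (transpose K ** X))"
  proof -
    have "- 2 * trace (C ** X1 ** transpose Ch)
         - 2 * (trace (transpose X1 ** M ** X ** Mh) + trace (transpose X ** M ** X1 ** Mh))
         = - 2 * trace (transpose K ** (A ** X1 + X1 ** transpose Ah))"
      unfolding a b c d by simp
    also have "\<dots> = 2 * trace (transpose K ** (X ** transpose (transpose W ** A ** E)))"
      unfolding e by (simp add: mm_neg_r trace_neg)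
    finally show ?thesis unfolding f1 .
  qed
  have x2: "trace (C ** X ** transpose (C ** E)) = ?T (transpose C ** C ** X)"
    by (subst trace_mul_sym) (simp add: as matrix_transpose_mul)
  have x3a: "trace (transpose X ** M ** X ** (transpose E ** M ** V)) = ?T (M ** V ** (transpose X ** M ** X))"
    by (subst trace_mul_sym) (simp add: as)
  have x3b: "trace (transpose X ** M ** X ** (transpose V ** M ** E)) = ?T (M ** V ** (transpose X ** M ** X))"
  proof -
    have "trace (transpose X ** M ** X ** (transpose V ** M ** E))
          = trace ((transpose X ** M ** X ** transpose V ** M) ** E)" by (simp add: as)
    also have "\<dots> = ?T (transpose (transpose X ** M ** X ** transpose V ** M))" by (rule trace_tr)
    also have "\<dots> = ?T (M ** V ** (transpose X ** M ** X))"
      by (simp add: matrix_transpose_mul as hM)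
    finally show ?thesis .
  qed
  have g1: "trace (Ch ** Ph1 ** transpose Ch) = trace (transpose Ch ** Ch ** Ph1)"
    by (rule trace_cyc)
  have g2: "trace (Ph1 ** Mh ** Ph ** Mh) = trace (Mh ** Ph ** Mh ** Ph1)"
    by (subst trace_mul_sym) (simp add: as)
  have g3: "trace (Ph ** Mh ** Ph1 ** Mh) = trace (Mh ** Ph ** Mh ** Ph1)"
    by (subst trace_mul_sym) (simp add: as)
  have ll: "transpose Ch ** Ch + 2 *\<^sub>R (Mh ** Ph ** Mh) = - (transpose Ah ** L + L ** Ah)"
    using hL by (simp add: algebra_simps eq_neg_iff_add_eq_0)
  have g4: "trace ((transpose Ah ** L + L ** Ah) ** Ph1) = trace (L ** (Ah ** Ph1 + Ph1 ** transpose Ah))"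
  proof -
    have "trace (transpose Ah ** L ** Ph1) = trace (L ** Ph1 ** transpose Ah)"
      by (subst trace_mul_sym) (simp add: as)
    then show ?thesis by (simp add: mm_add_r matrix_add_ldistrib trace_add as)
  qed
  have h: "Ah ** Ph1 + Ph1 ** transpose Ah
         = - (transpose W ** A ** E ** Ph + Ph ** transpose (transpose W ** A ** E))"
    using hPh1 by (simp add: algebra_simps eq_neg_iff_add_eq_0)
  have i1: "trace (L ** (transpose W ** A ** E ** Ph)) = ?T (transpose A ** W ** (L ** Ph))"
  proof -
    have "trace (L ** (transpose W ** A ** E ** Ph)) = trace ((L ** transpose W ** A) ** (E ** Ph))"
      by (simp add: as)
    also have "\<dots> = trace (E ** (Ph ** L ** transpose W ** A))"
      by (subst trace_mul_sym) (simp add: as)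
    also have "\<dots> = trace ((Ph ** L ** transpose W ** A) ** E)"
      by (rule trace_mul_sym)
    also have "\<dots> = ?T (transpose (Ph ** L ** transpose W ** A))" by (rule trace_tr)
    also have "\<dots> = ?T (transpose A ** W ** (L ** Ph))"
      by (simp add: matrix_transpose_mul as hPs hLs)
    finally show ?thesis .
  qed
  have i2: "trace (L ** (Ph ** transpose (transpose W ** A ** E))) = ?T (transpose A ** W ** (L ** Ph))"
  proof -
    have "trace (L ** (Ph ** transpose (transpose W ** A ** E)))
        = trace ((L ** Ph) ** (transpose E ** transpose A ** W))" by (simp add: as matrix_transpose_mul)
    also have "\<dots> = trace ((transpose E ** transpose A ** W) ** (L ** Ph))" by (rule trace_mul_sym)
    finally show ?thesis by (simp add: as)
  qed
  have partP1: "trace (Ch ** Ph1 ** transpose Ch) + trace (Ph1 ** Mh ** Ph ** Mh) + trace (Ph ** Mh ** Ph1 ** Mh)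
         = 2 * ?T (transpose A ** W ** (L ** Ph))"
  proof -
    have "trace (Ch ** Ph1 ** transpose Ch) + trace (Ph1 ** Mh ** Ph ** Mh) + trace (Ph ** Mh ** Ph1 ** Mh)
          = trace ((transpose Ch ** Ch + 2 *\<^sub>R (Mh ** Ph ** Mh)) ** Ph1)"
      unfolding g1 g2 g3 by (simp add: mm_add_r trace_add mm_scale_l trace_scale)
    also have "\<dots> = - trace (L ** (Ah ** Ph1 + Ph1 ** transpose Ah))"
      unfolding ll g4[symmetric] by (simp only: mm_neg_l trace_neg)
    also have "\<dots> = trace (L ** (transpose W ** A ** E ** Ph)) + trace (L ** (Ph ** transpose (transpose W ** A ** E)))"
      unfolding h by (simp add: mm_neg_r trace_neg matrix_add_ldistrib trace_add mm_diff_l trace_sub)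
    finally show ?thesis unfolding i1 i2 by simp
  qed
  have c1: "trace (C ** E ** Ph ** transpose Ch) = ?T (transpose C ** C ** (V ** Ph))"
  proof -
    have "trace (C ** E ** Ph ** transpose Ch) = trace (C ** (E ** (Ph ** transpose Ch)))" by (simp add: as)
    also have "\<dots> = trace (E ** (Ph ** transpose Ch ** C))"
      by (subst trace_mul_sym) (simp add: as)
    also have "\<dots> = trace ((Ph ** transpose Ch ** C) ** E)" by (rule trace_mul_sym)
    also have "\<dots> = ?T (transpose (Ph ** transpose Ch ** C))" by (rule trace_tr)
    also have "\<dots> = ?T (transpose C ** C ** (V ** Ph))"
      by (simp add: matrix_transpose_mul as hPs hCh)
    finally show ?thesis .
  qed
  have c2: "trace (Ch ** Ph ** transpose (C ** E)) = ?T (transpose C ** C ** (V ** Ph))"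
    by (subst trace_mul_sym) (simp add: as matrix_transpose_mul hCh)
  have m1: "trace (Ph ** (transpose E ** M ** V + transpose V ** M ** E) ** Ph ** Mh)
          = trace (Ph ** Mh ** Ph ** (transpose E ** M ** V + transpose V ** M ** E))"
  proof -
    let ?Md = "transpose E ** M ** V + transpose V ** M ** E"
    have "trace (Ph ** ?Md ** Ph ** Mh) = trace ((Ph ** ?Md) ** (Ph ** Mh))" by (simp add: as)
    also have "\<dots> = trace ((Ph ** Mh) ** (Ph ** ?Md))" by (rule trace_mul_sym)
    finally show ?thesis by (simp only: as)
  qed
  have m2: "trace (Ph ** Mh ** Ph ** (transpose E ** M ** V))
          = ?T (M ** V ** (Ph ** Mh ** Ph))"
    by (subst trace_mul_sym) (simp add: as)
  have m3: "trace (Ph ** Mh ** Ph ** (transpose V ** M ** E))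
          = ?T (M ** V ** (Ph ** Mh ** Ph))"
  proof -
    have "trace (Ph ** Mh ** Ph ** (transpose V ** M ** E))
          = trace ((Ph ** Mh ** Ph ** transpose V ** M) ** E)" by (simp add: as)
    also have "\<dots> = ?T (transpose (Ph ** Mh ** Ph ** transpose V ** M))" by (rule trace_tr)
    also have "\<dots> = ?T (M ** V ** (Ph ** Mh ** Ph))"
      by (simp add: matrix_transpose_mul as hM hMh hPs)
    finally show ?thesis .
  qed
  have fin: "?T (2 *\<^sub>R (transpose A ** W ** (transpose K ** X + L ** Ph)
                  + transpose C ** C ** (V ** Ph - X)
                  + 2 *\<^sub>R (M ** V ** (Ph ** Mh ** Ph - transpose X ** M ** X))))
     = 2 * ?T (transpose A ** W ** (transpose K ** X)) + 2 * ?T (transpose A ** W ** (L ** Ph))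
       + 2 * ?T (transpose C ** C ** (V ** Ph)) - 2 * ?T (transpose C ** C ** X)
       + 4 * ?T (M ** V ** (Ph ** Mh ** Ph)) - 4 * ?T (M ** V ** (transpose X ** M ** X))"
    by (simp add: matrix_add_ldistrib mm_diff_l mm_scale_r trace_add trace_sub trace_scale algebra_simps)
  have s1: "trace (transpose X ** M ** X ** (transpose E ** M ** V + transpose V ** M ** E))
      = 2 * ?T (M ** V ** (transpose X ** M ** X))"
    using x3a x3b by (simp add: matrix_add_ldistrib trace_add)
  have s2: "trace (Ph ** Mh ** Ph ** (transpose E ** M ** V + transpose V ** M ** E))
      = 2 * ?T (M ** V ** (Ph ** Mh ** Ph))"
    using m2 m3 by (simp add: matrix_add_ldistrib trace_add)
  show ?thesis unfolding fin m1 s1 s2 x2 c1 c2 using partX1 partP1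
    by (simp only: distrib_left right_diff_distrib)
qed


lemma syl_uniq2:
  fixes A :: "real^'n^'n" and B :: "real^'r^'r" and Y Z R :: "real^'r^'n"
  assumes "stab A" "stab B" "A ** Y + Y ** transpose B + R = 0" "A ** Z + Z ** transpose B + R = 0"
  shows "Z = Y"
proof -
  have "A ** (Z - Y) + (Z - Y) ** transpose B = (A ** Z - A ** Y) + (Z ** transpose B - Y ** transpose B)"
    by (simp only: mm_diff_l mm_diff_r)
  also have "\<dots> = (A ** Z + Z ** transpose B + R) - (A ** Y + Y ** transpose B + R)"
    by (simp add: algebra_simps)
  also have "\<dots> = 0" using assms(3,4) by simp
  finally have "Z - Y = 0" using syl[OF assms(1,2)] by blast
  then show ?thesis by simp
qed

lemma syl_the:
  fixes A :: "real^'n^'n" and B :: "real^'r^'r" and Y R :: "real^'r^'n"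
  assumes "stab A" "stab B" "A ** Y + Y ** transpose B + R = 0"
  shows "(THE Z. A ** Z + Z ** transpose B + R = 0) = Y"
proof (rule the_equality)
  show "A ** Y + Y ** transpose B + R = 0" by (rule assms(3))
next
  fix Z assume "A ** Z + Z ** transpose B + R = 0"
  then show "Z = Y" by (rule syl_uniq2[OF assms])
qed

lemma W_part:
  fixes A M :: "real^'n^'n" and B :: "real^'m^'n" and C :: "real^'n^1"
    and W V :: "real^'r^'n"
    and P :: "real^'n^'n" and X K :: "real^'r^'n" and Ph L :: "real^'r^'r"
  assumes sA: "stab A" and sAh: "stab (red_A A W V)"
    and hM: "transpose M = M" and hPs: "transpose Ph = Ph" and hLs: "transpose L = L"
    and hP: "A ** P + P ** transpose A + B ** transpose B = 0"
    and hX: "A ** X + X ** transpose (red_A A W V) + B ** transpose (red_B B W) = 0"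
    and hPh: "red_A A W V ** Ph + Ph ** transpose (red_A A W V)
              + red_B B W ** transpose (red_B B W) = 0"
    and hK: "transpose A ** K + K ** red_A A W V - transpose C ** red_C C V
             - 2 *\<^sub>R (M ** X ** red_M M V) = 0"
    and hL: "transpose (red_A A W V) ** L + L ** red_A A W V + transpose (red_C C V) ** red_C C V
             + 2 *\<^sub>R (red_M M V ** Ph ** red_M M V) = 0"
  shows "((\<lambda>t. J1 A B C M (W + t *\<^sub>R ematrix i j) V) has_real_derivative
              ((2::real) *\<^sub>R (A ** V ** (transpose X ** K + Ph ** L)
                  + B ** transpose B ** (K + W ** L))) $ i $ j) (at 0)"
proof -
  define E :: "real^'r^'n" where "E = ematrix i j"
  define Ah where "Ah = red_A A W V"
  define Bh where "Bh = red_B B W"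
  define Ch where "Ch = red_C C V"
  define Mh where "Mh = red_M M V"
  define D where "D = transpose E ** A ** V"
  define Bd where "Bd = transpose E ** B"
  have rA: "red_A A (W + t *\<^sub>R E) V = Ah + t *\<^sub>R D" for t
    by (simp add: Ah_def D_def red_A_def tr_add transpose_scalar mm_add_r mm_scale_l)
  have rB: "red_B B (W + t *\<^sub>R E) = Bh + t *\<^sub>R Bd" for t
    by (simp add: Bh_def Bd_def red_B_def tr_add transpose_scalar mm_add_r mm_scale_l)
  have hMh: "transpose Mh = Mh"
    by (simp add: Mh_def red_M_def matrix_transpose_mul hM matrix_mul_assoc)
  have P0: "(THE P. A ** P + P ** transpose A + B ** transpose B = 0) = P"
    by (rule syl_the[OF sA sA hP])
  define XF where "XF t = (THE X. A ** X + X ** transpose (red_A A (W + t *\<^sub>R E) V)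
                      + B ** transpose (red_B B (W + t *\<^sub>R E)) = 0)" for t
  obtain X1 where X1: "(A ** X1 + X1 ** transpose Ah) + X ** transpose D + B ** transpose Bd = 0"
    and XF0: "XF 0 = X" and dX: "(XF has_vector_derivative X1) (at 0)"
  proof -
    have "\<exists>x1. (\<lambda>y. A ** y + y ** transpose Ah) x1 + (\<lambda>y. y ** transpose D) X + B ** transpose Bd = 0 \<and>
           (THE y. A ** y + y ** transpose (red_A A (W + 0 *\<^sub>R E) V) + B ** transpose (red_B B (W + 0 *\<^sub>R E)) = 0) = X \<and>
           ((\<lambda>t. THE y. A ** y + y ** transpose (red_A A (W + t *\<^sub>R E) V) + B ** transpose (red_B B (W + t *\<^sub>R E)) = 0)
              has_vector_derivative x1) (at 0)"
    proof (rule GL[where Sz = "\<lambda>y. A ** y + y ** transpose Ah" and So = "\<lambda>y. y ** transpose D"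
        and F = "\<lambda>t y. A ** y + y ** transpose (red_A A (W + t *\<^sub>R E) V) + B ** transpose (red_B B (W + t *\<^sub>R E))"
        and Ra = "B ** transpose Bh" and Rb = "B ** transpose Bd" and Rc = 0 and xz = X])
      show "linear (\<lambda>y. A ** y + y ** transpose Ah)"
        by (rule linearI) (simp_all add: matrix_add_ldistrib mm_add_r mm_scale_l mm_scale_r algebra_simps)
      show "linear (\<lambda>y. y ** transpose D)"
        by (rule linearI) (simp_all add: mm_add_r mm_scale_l)
      show "y = 0" if "A ** y + y ** transpose Ah = 0" for y
        by (rule syl[OF sA sAh]) (use that in \<open>simp add: Ah_def\<close>)
      show "A ** y + y ** transpose (red_A A (W + t *\<^sub>R E) V) + B ** transpose (red_B B (W + t *\<^sub>R E))
          = (A ** y + y ** transpose Ah) + t *\<^sub>R (y ** transpose D)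
            + (B ** transpose Bh + t *\<^sub>R (B ** transpose Bd) + t\<^sup>2 *\<^sub>R 0)" for t y
        by (simp add: rA rB tr_add transpose_scalar matrix_add_ldistrib mm_scale_r algebra_simps)
      show "(A ** X + X ** transpose Ah) + B ** transpose Bh = 0"
        using hX by (simp add: Ah_def Bh_def)
    qed
    then show ?thesis using that unfolding XF_def by auto
  qed
  define PF where "PF t = (THE Ph. red_A A (W + t *\<^sub>R E) V ** Ph + Ph ** transpose (red_A A (W + t *\<^sub>R E) V)
                      + red_B B (W + t *\<^sub>R E) ** transpose (red_B B (W + t *\<^sub>R E)) = 0)" for t
  obtain Ph1 where Ph1: "(Ah ** Ph1 + Ph1 ** transpose Ah) + (D ** Ph + Ph ** transpose D)
                         + (Bh ** transpose Bd + Bd ** transpose Bh) = 0"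
    and PF0: "PF 0 = Ph" and dP: "(PF has_vector_derivative Ph1) (at 0)"
  proof -
    have "\<exists>x1. (\<lambda>y. Ah ** y + y ** transpose Ah) x1 + (\<lambda>y. D ** y + y ** transpose D) Ph
              + (Bh ** transpose Bd + Bd ** transpose Bh) = 0 \<and>
           (THE y. red_A A (W + 0 *\<^sub>R E) V ** y + y ** transpose (red_A A (W + 0 *\<^sub>R E) V)
                      + red_B B (W + 0 *\<^sub>R E) ** transpose (red_B B (W + 0 *\<^sub>R E)) = 0) = Ph \<and>
           ((\<lambda>t. THE y. red_A A (W + t *\<^sub>R E) V ** y + y ** transpose (red_A A (W + t *\<^sub>R E) V)
                      + red_B B (W + t *\<^sub>R E) ** transpose (red_B B (W + t *\<^sub>R E)) = 0)
              has_vector_derivative x1) (at 0)"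
    proof (rule GL[where Sz = "\<lambda>y. Ah ** y + y ** transpose Ah" and So = "\<lambda>y. D ** y + y ** transpose D"
        and F = "\<lambda>t y. red_A A (W + t *\<^sub>R E) V ** y + y ** transpose (red_A A (W + t *\<^sub>R E) V)
                      + red_B B (W + t *\<^sub>R E) ** transpose (red_B B (W + t *\<^sub>R E))"
        and Ra = "Bh ** transpose Bh" and Rb = "Bh ** transpose Bd + Bd ** transpose Bh"
        and Rc = "Bd ** transpose Bd" and xz = Ph])
      show "linear (\<lambda>y. Ah ** y + y ** transpose Ah)"
        by (rule linearI) (simp_all add: matrix_add_ldistrib mm_add_r mm_scale_l mm_scale_r algebra_simps)
      show "linear (\<lambda>y. D ** y + y ** transpose D)"
        by (rule linearI) (simp_all add: matrix_add_ldistrib mm_add_r mm_scale_l mm_scale_r algebra_simps)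
      show "y = 0" if "Ah ** y + y ** transpose Ah = 0" for y
        by (rule syl[OF sAh sAh]) (use that in \<open>simp add: Ah_def\<close>)
      show "red_A A (W + t *\<^sub>R E) V ** y + y ** transpose (red_A A (W + t *\<^sub>R E) V)
                      + red_B B (W + t *\<^sub>R E) ** transpose (red_B B (W + t *\<^sub>R E))
          = (Ah ** y + y ** transpose Ah) + t *\<^sub>R (D ** y + y ** transpose D)
            + (Bh ** transpose Bh + t *\<^sub>R (Bh ** transpose Bd + Bd ** transpose Bh) + t\<^sup>2 *\<^sub>R (Bd ** transpose Bd))" for t y
        by (simp add: rA rB tr_add transpose_scalar matrix_add_ldistrib mm_add_r mm_scale_l mm_scale_r
              algebra_simps power2_eq_square)
      show "(Ah ** Ph + Ph ** transpose Ah) + Bh ** transpose Bh = 0"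
        using hPh by (simp add: Ah_def Bh_def)
    qed
    then show ?thesis using that unfolding PF_def by auto
  qed
  define G where "G t = trace (C ** P ** transpose C - 2 *\<^sub>R (C ** XF t ** transpose Ch) + Ch ** PF t ** transpose Ch)
       + (trace (P ** M ** P ** M) - 2 * trace (transpose (XF t) ** M ** XF t ** Mh)
          + trace (PF t ** Mh ** PF t ** Mh))" for t
  have JG: "J1 A B C M (W + t *\<^sub>R ematrix i j) V = G t" for t
    unfolding J1_def Let_def G_def XF_def PF_def P0 E_def Ch_def Mh_def
    by (simp add: red_C_def red_M_def)
  let ?tg = "(2::real) *\<^sub>R (A ** V ** (transpose X ** K + Ph ** L) + B ** transpose B ** (K + W ** L))"
  have tE: "trace (transpose E ** ?tg) = ?tg $ i $ j"
    unfolding E_def by (rule trace_E_left)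
  have AW: "- 2 * trace (C ** X1 ** transpose Ch) + trace (Ch ** Ph1 ** transpose Ch)
         - 2 * (trace (transpose X1 ** M ** X ** Mh) + trace (transpose X ** M ** X1 ** Mh))
         + (trace (Ph1 ** Mh ** Ph ** Mh) + trace (Ph ** Mh ** Ph1 ** Mh))
       = trace (transpose E ** ?tg)"
    using hM hMh hPs hLs hK hL X1 Ph1 unfolding D_def Bd_def Ah_def Bh_def Ch_def Mh_def
    by (intro alg_W) (simp_all add: red_B_def)
  have "(G has_vector_derivative ?tg $ i $ j) (at 0)"
    unfolding G_def
    apply (rule has_vector_derivative_eq_rhs)
     apply ((rule const_vd refl | rule add_vd | rule diff_vd | rule trace_vd | rule mm_vd | rule transpose_vd
       | rule scale_vd | rule rmult_vd | rule dX | rule dP | rule refl)+)[1]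
    apply (simp only: XF0 PF0)
    apply (subst tE[symmetric])
    apply (subst AW[symmetric])
    apply (simp add: trace_add trace_sub trace_scale mm_add_r matrix_add_ldistrib matrix_mul_assoc)
    done
  then show ?thesis
    unfolding JG has_real_derivative_iff_has_vector_derivative by (simp add: fun_eq_iff)
qed


lemma V_part:
  fixes A M :: "real^'n^'n" and B :: "real^'m^'n" and C :: "real^'n^1"
    and W V :: "real^'r^'n"
    and P :: "real^'n^'n" and X K :: "real^'r^'n" and Ph L :: "real^'r^'r"
  assumes sA: "stab A" and sAh: "stab (red_A A W V)"
    and hM: "transpose M = M" and hPs: "transpose Ph = Ph" and hLs: "transpose L = L"
    and hP: "A ** P + P ** transpose A + B ** transpose B = 0"
    and hX: "A ** X + X ** transpose (red_A A W V) + B ** transpose (red_B B W) = 0"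
    and hPh: "red_A A W V ** Ph + Ph ** transpose (red_A A W V)
              + red_B B W ** transpose (red_B B W) = 0"
    and hK: "transpose A ** K + K ** red_A A W V - transpose C ** red_C C V
             - 2 *\<^sub>R (M ** X ** red_M M V) = 0"
    and hL: "transpose (red_A A W V) ** L + L ** red_A A W V + transpose (red_C C V) ** red_C C V
             + 2 *\<^sub>R (red_M M V ** Ph ** red_M M V) = 0"
  shows "((\<lambda>t. J1 A B C M W (V + t *\<^sub>R ematrix i j)) has_real_derivative
              ((2::real) *\<^sub>R (transpose A ** W ** (transpose K ** X + L ** Ph)
                  + transpose C ** C ** (V ** Ph - X)
                  + 2 *\<^sub>R (M ** V ** (Ph ** red_M M V ** Ph - transpose X ** M ** X)))) $ i $ j) (at 0)"
proof -
  define E :: "real^'r^'n" where "E = ematrix i j"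
  define Ah where "Ah = red_A A W V"
  define Bh where "Bh = red_B B W"
  define Ch where "Ch = red_C C V"
  define Mh where "Mh = red_M M V"
  define D where "D = transpose W ** A ** E"
  have rA: "red_A A W (V + t *\<^sub>R E) = Ah + t *\<^sub>R D" for t
    by (simp add: Ah_def D_def red_A_def matrix_add_ldistrib mm_scale_r)
  have hMh: "transpose Mh = Mh"
    by (simp add: Mh_def red_M_def matrix_transpose_mul hM matrix_mul_assoc)
  have P0: "(THE P. A ** P + P ** transpose A + B ** transpose B = 0) = P"
    by (rule syl_the[OF sA sA hP])
  define XF where "XF t = (THE X. A ** X + X ** transpose (red_A A W (V + t *\<^sub>R E))
                      + B ** transpose (red_B B W) = 0)" for t
  obtain X1 where X1: "(A ** X1 + X1 ** transpose Ah) + X ** transpose D + 0 = 0"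
    and XF0: "XF 0 = X" and dX: "(XF has_vector_derivative X1) (at 0)"
  proof -
    have "\<exists>x1. (\<lambda>y. A ** y + y ** transpose Ah) x1 + (\<lambda>y. y ** transpose D) X + 0 = 0 \<and>
           (THE y. A ** y + y ** transpose (red_A A W (V + 0 *\<^sub>R E)) + B ** transpose (red_B B W) = 0) = X \<and>
           ((\<lambda>t. THE y. A ** y + y ** transpose (red_A A W (V + t *\<^sub>R E)) + B ** transpose (red_B B W) = 0)
              has_vector_derivative x1) (at 0)"
    proof (rule GL[where Sz = "\<lambda>y. A ** y + y ** transpose Ah" and So = "\<lambda>y. y ** transpose D"
        and F = "\<lambda>t y. A ** y + y ** transpose (red_A A W (V + t *\<^sub>R E)) + B ** transpose (red_B B W)"
        and Ra = "B ** transpose Bh" and Rb = 0 and Rc = 0 and xz = X])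
      show "linear (\<lambda>y. A ** y + y ** transpose Ah)"
        by (rule linearI) (simp_all add: matrix_add_ldistrib mm_add_r mm_scale_l mm_scale_r algebra_simps)
      show "linear (\<lambda>y. y ** transpose D)"
        by (rule linearI) (simp_all add: mm_add_r mm_scale_l)
      show "y = 0" if "A ** y + y ** transpose Ah = 0" for y
        by (rule syl[OF sA sAh]) (use that in \<open>simp add: Ah_def\<close>)
      show "A ** y + y ** transpose (red_A A W (V + t *\<^sub>R E)) + B ** transpose (red_B B W)
          = (A ** y + y ** transpose Ah) + t *\<^sub>R (y ** transpose D)
            + (B ** transpose Bh + t *\<^sub>R 0 + t\<^sup>2 *\<^sub>R 0)" for t y
        by (simp add: rA Bh_def tr_add transpose_scalar matrix_add_ldistrib mm_scale_r algebra_simps)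
      show "(A ** X + X ** transpose Ah) + B ** transpose Bh = 0"
        using hX by (simp add: Ah_def Bh_def)
    qed
    then show ?thesis using that unfolding XF_def by auto
  qed
  define PF where "PF t = (THE Ph. red_A A W (V + t *\<^sub>R E) ** Ph + Ph ** transpose (red_A A W (V + t *\<^sub>R E))
                      + red_B B W ** transpose (red_B B W) = 0)" for t
  obtain Ph1 where Ph1: "(Ah ** Ph1 + Ph1 ** transpose Ah) + (D ** Ph + Ph ** transpose D) + 0 = 0"
    and PF0: "PF 0 = Ph" and dP: "(PF has_vector_derivative Ph1) (at 0)"
  proof -
    have "\<exists>x1. (\<lambda>y. Ah ** y + y ** transpose Ah) x1 + (\<lambda>y. D ** y + y ** transpose D) Ph + 0 = 0 \<and>
           (THE y. red_A A W (V + 0 *\<^sub>R E) ** y + y ** transpose (red_A A W (V + 0 *\<^sub>R E))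
                      + red_B B W ** transpose (red_B B W) = 0) = Ph \<and>
           ((\<lambda>t. THE y. red_A A W (V + t *\<^sub>R E) ** y + y ** transpose (red_A A W (V + t *\<^sub>R E))
                      + red_B B W ** transpose (red_B B W) = 0)
              has_vector_derivative x1) (at 0)"
    proof (rule GL[where Sz = "\<lambda>y. Ah ** y + y ** transpose Ah" and So = "\<lambda>y. D ** y + y ** transpose D"
        and F = "\<lambda>t y. red_A A W (V + t *\<^sub>R E) ** y + y ** transpose (red_A A W (V + t *\<^sub>R E))
                      + red_B B W ** transpose (red_B B W)"
        and Ra = "Bh ** transpose Bh" and Rb = 0 and Rc = 0 and xz = Ph])
      show "linear (\<lambda>y. Ah ** y + y ** transpose Ah)"
        by (rule linearI) (simp_all add: matrix_add_ldistrib mm_add_r mm_scale_l mm_scale_r algebra_simps)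
      show "linear (\<lambda>y. D ** y + y ** transpose D)"
        by (rule linearI) (simp_all add: matrix_add_ldistrib mm_add_r mm_scale_l mm_scale_r algebra_simps)
      show "y = 0" if "Ah ** y + y ** transpose Ah = 0" for y
        by (rule syl[OF sAh sAh]) (use that in \<open>simp add: Ah_def\<close>)
      show "red_A A W (V + t *\<^sub>R E) ** y + y ** transpose (red_A A W (V + t *\<^sub>R E))
                      + red_B B W ** transpose (red_B B W)
          = (Ah ** y + y ** transpose Ah) + t *\<^sub>R (D ** y + y ** transpose D)
            + (Bh ** transpose Bh + t *\<^sub>R 0 + t\<^sup>2 *\<^sub>R 0)" for t y
        by (simp add: rA Bh_def tr_add transpose_scalar matrix_add_ldistrib mm_add_r mm_scale_l mm_scale_r
              algebra_simps)
      show "(Ah ** Ph + Ph ** transpose Ah) + Bh ** transpose Bh = 0"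
        using hPh by (simp add: Ah_def Bh_def)
    qed
    then show ?thesis using that unfolding PF_def by auto
  qed
  define ChF where "ChF t = red_C C (V + t *\<^sub>R E)" for t
  define MhF where "MhF t = red_M M (V + t *\<^sub>R E)" for t
  define Md where "Md = transpose E ** M ** V + transpose V ** M ** E"
  have ChF0: "ChF 0 = Ch" by (simp add: ChF_def Ch_def)
  have MhF0: "MhF 0 = Mh" by (simp add: MhF_def Mh_def)
  have dC: "(ChF has_vector_derivative C ** E) (at 0)"
  proof -
    have "((\<lambda>t. C ** (V + t *\<^sub>R E)) has_vector_derivative C ** E) (at 0)"
      by (rule mm_vd[OF const_vd[OF refl] lin_vd]) simp
    then show ?thesis unfolding ChF_def red_C_def by simp
  qed
  have dM: "(MhF has_vector_derivative Md) (at 0)"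
  proof -
    have "((\<lambda>t. transpose (V + t *\<^sub>R E) ** M ** (V + t *\<^sub>R E)) has_vector_derivative Md) (at 0)"
      by (rule mm_vd[OF mm_vd[OF transpose_vd[OF lin_vd refl] const_vd[OF refl] refl] lin_vd])
         (simp add: Md_def add.commute)
    then show ?thesis unfolding MhF_def red_M_def by simp
  qed
  define G where "G t = trace (C ** P ** transpose C - 2 *\<^sub>R (C ** XF t ** transpose (ChF t)) + ChF t ** PF t ** transpose (ChF t))
       + (trace (P ** M ** P ** M) - 2 * trace (transpose (XF t) ** M ** XF t ** MhF t)
          + trace (PF t ** MhF t ** PF t ** MhF t))" for t
  have JG: "J1 A B C M W (V + t *\<^sub>R ematrix i j) = G t" for t
    unfolding J1_def Let_def G_def XF_def PF_def P0 E_def ChF_def MhF_def ..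
  let ?tg = "(2::real) *\<^sub>R (transpose A ** W ** (transpose K ** X + L ** Ph)
                  + transpose C ** C ** (V ** Ph - X)
                  + 2 *\<^sub>R (M ** V ** (Ph ** Mh ** Ph - transpose X ** M ** X)))"
  have tE: "trace (transpose E ** ?tg) = ?tg $ i $ j"
    unfolding E_def by (rule trace_E_left)
  have AV: "- 2 * (trace (C ** X1 ** transpose Ch) + trace (C ** X ** transpose (C ** E)))
     + (trace (C ** E ** Ph ** transpose Ch) + trace (Ch ** Ph1 ** transpose Ch) + trace (Ch ** Ph ** transpose (C ** E)))
     - 2 * (trace (transpose X1 ** M ** X ** Mh) + trace (transpose X ** M ** X1 ** Mh)
            + trace (transpose X ** M ** X ** (transpose E ** M ** V + transpose V ** M ** E)))
     + (trace (Ph1 ** Mh ** Ph ** Mh) + trace (Ph ** (transpose E ** M ** V + transpose V ** M ** E) ** Ph ** Mh)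
        + trace (Ph ** Mh ** Ph1 ** Mh) + trace (Ph ** Mh ** Ph ** (transpose E ** M ** V + transpose V ** M ** E)))
       = trace (transpose E ** ?tg)"
    using hM hMh hPs hLs hK hL X1 Ph1 unfolding D_def Ah_def Ch_def Mh_def
    by (intro alg_V) (simp_all add: red_C_def)
  have "(G has_vector_derivative ?tg $ i $ j) (at 0)"
    unfolding G_def
    apply (rule has_vector_derivative_eq_rhs)
     apply ((rule const_vd refl | rule add_vd | rule diff_vd | rule trace_vd | rule mm_vd | rule transpose_vd
       | rule scale_vd | rule rmult_vd | rule dX | rule dP | rule dC | rule dM | rule refl)+)[1]
    apply (simp only: XF0 PF0 ChF0 MhF0)
    apply (subst tE[symmetric])
    apply (subst AV[symmetric])
    apply (simp add: Md_def trace_add trace_sub trace_scale mm_add_r matrix_add_ldistrib matrix_mul_assoc)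
    done
  then show ?thesis
    unfolding JG has_real_derivative_iff_has_vector_derivative Mh_def by (simp add: fun_eq_iff)
qed


theorem theorem1:
  fixes A M :: "real^'n^'n" and B :: "real^'m^'n" and C :: "real^'n^1"
    and W V :: "real^'r^'n"
    and P :: "real^'n^'n" and X K :: "real^'r^'n" and Ph L :: "real^'r^'r"
  assumes hA: "hurwitz A"
    and hM: "transpose M = M"
    and hWV: "transpose W ** V = mat 1"
    and hAh: "hurwitz (red_A A W V)"
    and hP: "A ** P + P ** transpose A + B ** transpose B = 0"
    and hX: "A ** X + X ** transpose (red_A A W V) + B ** transpose (red_B B W) = 0"
    and hPh: "red_A A W V ** Ph + Ph ** transpose (red_A A W V)
              + red_B B W ** transpose (red_B B W) = 0"
    and hK: "transpose A ** K + K ** red_A A W V - transpose C ** red_C C V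
             - 2 *\<^sub>R (M ** X ** red_M M V) = 0"
    and hL: "transpose (red_A A W V) ** L + L ** red_A A W V + transpose (red_C C V) ** red_C C V
             + 2 *\<^sub>R (red_M M V ** Ph ** red_M M V) = 0"
  shows "(\<forall>i j. ((\<lambda>t. J1 A B C M (W + t *\<^sub>R ematrix i j) V) has_real_derivative
              ((2::real) *\<^sub>R (A ** V ** (transpose X ** K + Ph ** L)
                  + B ** transpose B ** (K + W ** L))) $ i $ j) (at 0)) \<and>
         (\<forall>i j. ((\<lambda>t. J1 A B C M W (V + t *\<^sub>R ematrix i j)) has_real_derivative
              ((2::real) *\<^sub>R (transpose A ** W ** (transpose K ** X + L ** Ph)
                  + transpose C ** C ** (V ** Ph - X)
                  + 2 *\<^sub>R (M ** V ** (Ph ** red_M M V ** Ph - transpose X ** M ** X)))) $ i $ j) (at 0))"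
proof -
  define Ah where "Ah = red_A A W V"
  define Bh where "Bh = red_B B W"
  define Ch where "Ch = red_C C V"
  define Mh where "Mh = red_M M V"
  have sA: "stab A" by (rule hurwitz_stab[OF hA])
  have sAh: "stab Ah" unfolding Ah_def by (rule hurwitz_stab[OF hAh])
  have sAhT: "stab (transpose Ah)" by (rule stab_T[OF sAh])
  have hMh: "transpose Mh = Mh"
    by (simp add: Mh_def red_M_def matrix_transpose_mul hM matrix_mul_assoc)
  have hPs: "transpose Ph = Ph"
  proof (rule syl_uniq2[OF sAh sAh])
    show "Ah ** Ph + Ph ** transpose Ah + Bh ** transpose Bh = 0"
      using hPh by (simp add: Ah_def Bh_def)
    have "transpose (Ah ** Ph + Ph ** transpose Ah + Bh ** transpose Bh) = 0"
      using hPh by (simp add: Ah_def Bh_def tr_zero)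
    then show "Ah ** transpose Ph + transpose Ph ** transpose Ah + Bh ** transpose Bh = 0"
      by (simp add: tr_add matrix_transpose_mul add.commute)
  qed
  have hLs: "transpose L = L"
  proof (rule syl_uniq2[OF sAhT sAhT])
    show "transpose Ah ** L + L ** transpose (transpose Ah) + (transpose Ch ** Ch + 2 *\<^sub>R (Mh ** Ph ** Mh)) = 0"
      using hL by (simp add: Ah_def Ch_def Mh_def add.assoc)
    have "transpose (transpose Ah ** L + L ** Ah + transpose Ch ** Ch + 2 *\<^sub>R (Mh ** Ph ** Mh)) = 0"
      using hL by (simp add: Ah_def Ch_def Mh_def tr_zero)
    then show "transpose Ah ** transpose L + transpose L ** transpose (transpose Ah)
             + (transpose Ch ** Ch + 2 *\<^sub>R (Mh ** Ph ** Mh)) = 0"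
      by (simp add: tr_add transpose_scalar matrix_transpose_mul hMh hPs matrix_mul_assoc)
         (simp add: algebra_simps)
  qed
  show ?thesis
  proof (intro conjI allI)
    fix i j
    show "((\<lambda>t. J1 A B C M (W + t *\<^sub>R ematrix i j) V) has_real_derivative
              ((2::real) *\<^sub>R (A ** V ** (transpose X ** K + Ph ** L)
                  + B ** transpose B ** (K + W ** L))) $ i $ j) (at 0)"
      by (rule W_part[OF sA sAh[unfolded Ah_def] hM hPs hLs hP hX hPh hK hL])
  next
    fix i j
    show "((\<lambda>t. J1 A B C M W (V + t *\<^sub>R ematrix i j)) has_real_derivative
              ((2::real) *\<^sub>R (transpose A ** W ** (transpose K ** X + L ** Ph)
                  + transpose C ** C ** (V ** Ph - X)
                  + 2 *\<^sub>R (M ** V ** (Ph ** red_M M V ** Ph - transpose X ** M ** X)))) $ i $ j) (at 0)"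
      by (rule V_part[OF sA sAh[unfolded Ah_def] hM hPs hLs hP hX hPh hK hL])
  qed
qed

end
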